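(* Let $a<b$ and let $f:[a,b]\to\mathbb{R}$ be continuous. For $a\le u<x\le b$ write $I_f(u,x)=\frac{1}{x-u}\int_u^x f(t)\,\mathrm{d}t$. If $$\bigl[f(a)-I_f(a,b)\bigr]\cdot\bigl[f(b)-I_f(a,b)\bigr]\geq 0,$$ then there exists $\eta\in(a,b]$ such that $f(\eta)=I_f(a,\eta)$.
   Context: $I_f(u,x)$ denotes the integral mean of $f$ over $[u,x]$. *)

theory Defs
  imports "HOL-Analysis.Analysis"
begin

definition integral_mean :: "(real \<Rightarrow> real) \<Rightarrow> real \<Rightarrow> real \<Rightarrow> real" where
  "integral_mean f u x = integral {u..x} f / (x - u)"

end

theory Submission
  imports Defs
begin

lemma core:
  fixes f :: "real \<Rightarrow> real" and a b :: real
  assumes ab: "a < b"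
    and cf: "continuous_on {a..b} f"
    and fa: "f a \<ge> integral_mean f a b"
    and fb: "f b > integral_mean f a b"
  shows "\<exists>\<eta>\<in>{a<..<b}. f \<eta> = integral_mean f a \<eta>"
proof -
  define F where "F x = integral {a..x} f" for x
  define h where "h x = (if x = a then f a else F x / (x - a))" for x
  define M where "M = integral_mean f a b"
  have hM: "h b = M" using ab by (simp add: h_def M_def F_def integral_mean_def)
  have dF: "(F has_real_derivative f x) (at x within {a..b})" if "x \<in> {a..b}" for x
    unfolding F_def using integral_has_real_derivative[OF cf that] .
  have Fa: "F a = 0" by (simp add: F_def)
  have dh: "(h has_real_derivative (f x * (x - a) - F x) / (x - a)^2) (at x within {a..b})"
    if x: "x \<in> {a<..b}" for x
  proof -
    have xa: "x - a \<noteq> 0" using x by auto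
    have "((\<lambda>y. F y / (y - a)) has_real_derivative (f x * (x - a) - F x * 1) / ((x - a) * (x - a))) (at x within {a..b})"
      using x by (intro DERIV_divide dF derivative_eq_intros) auto
    then have "((\<lambda>y. F y / (y - a)) has_real_derivative (f x * (x - a) - F x) / (x - a)^2) (at x within {a..b})"
      by (simp add: power2_eq_square)
    then show ?thesis
      by (rule has_field_derivative_transform_within[where d="x - a"])
         (use x in \<open>auto simp: h_def dist_real_def\<close>)
  qed
  have conth: "continuous_on {a..b} h"
    unfolding continuous_on_eq_continuous_within
  proof
    fix x assume x: "x \<in> {a..b}"
    show "continuous (at x within {a..b}) h"
    proof (cases "x = a")
      case True
      have "((\<lambda>y. (F y - F a) / (y - a)) \<longlongrightarrow> f a) (at a within {a..b})"
        using dF[of a] ab by (simp add: has_field_derivative_iff)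
      then have "((\<lambda>y. F y / (y - a)) \<longlongrightarrow> f a) (at a within {a..b})"
        by (simp add: Fa)
      then have "(h \<longlongrightarrow> f a) (at a within {a..b})"
        by (rule Lim_transform_within[OF _ zero_less_one]) (auto simp: h_def)
      then have "(h \<longlongrightarrow> h a) (at a within {a..b})" by (simp add: h_def)
      then show ?thesis using True by (simp add: continuous_within)
    next
      case False
      then have "x \<in> {a<..b}" using x by auto
      from dh[OF this] show ?thesis
        by (rule DERIV_continuous)
    qed
  qed
  have db: "(h has_real_derivative (f b - M) / (b - a)) (at b within {a..b})"
  proof -
    have "(f b * (b - a) - F b) / (b - a)^2 = (f b - M) / (b - a)"
    proof -
      have "M = F b / (b - a)" by (simp add: M_def integral_mean_def F_def)
      then have "F b = M * (b - a)" using ab by simp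
      then have "(f b * (b - a) - F b) = (f b - M) * (b - a)" by (simp add: algebra_simps)
      then show ?thesis using ab by (simp add: power2_eq_square)
    qed
    moreover have "b \<in> {a<..b}" using ab by simp
    ultimately show ?thesis using dh[of b] by simp
  qed
  have pos: "(f b - M) / (b - a) > 0" using fb ab unfolding M_def by (intro divide_pos_pos) auto
  have "((\<lambda>y. (h y - h b) / (y - b)) \<longlongrightarrow> (f b - M) / (b - a)) (at b within {a..b})"
    using db unfolding has_field_derivative_iff .
  then have "\<forall>\<^sub>F y in at b within {a..b}. (h y - h b) / (y - b) > 0"
    using order_tendstoD(1)[OF _ pos] by blast
  then have "\<exists>d>0. \<forall>y\<in>{a..b}. y \<noteq> b \<and> dist y b < d \<longrightarrow> (h y - h b) / (y - b) > 0"
    by (simp only: eventually_at)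
  then obtain d where d: "d > 0" and dP': "\<forall>y\<in>{a..b}. y \<noteq> b \<and> dist y b < d \<longrightarrow> (h y - h b) / (y - b) > 0"
    by (elim exE conjE)
  have dP: "\<And>y. y \<in> {a..b} \<Longrightarrow> 0 < dist y b \<Longrightarrow> dist y b < d \<Longrightarrow> (h y - h b) / (y - b) > 0"
    using dP' by (metis zero_less_dist_iff)
  define y where "y = max a (b - d/2)"
  have y: "y \<in> {a..b}" "y < b" using ab d by (auto simp: y_def)
  have "dist y b < d" using y d ab by (simp add: y_def dist_real_def)
  moreover have "0 < dist y b" using y by (simp add: dist_real_def)
  ultimately have "(h y - h b) / (y - b) > 0" using y dP by blast
  then have hy: "h y < h b" using y by (simp add: zero_less_divide_iff)
  obtain c where c: "c \<in> {a..b}" and cmin: "\<And>z. z \<in> {a..b} \<Longrightarrow> h c \<le> h z"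
    using continuous_attains_inf[OF compact_Icc _ conth] ab by auto
  have "h c < h b" using cmin[OF y(1)] hy by simp
  have ha: "h a \<ge> h b" using fa hM by (simp add: h_def M_def)
  have cb: "c \<noteq> b" "c \<noteq> a" using \<open>h c < h b\<close> ha by auto
  then have cin: "c \<in> {a<..<b}" using c by auto
  have dw: "(h has_real_derivative (f c * (c - a) - F c) / (c - a)^2) (at c within {a<..<b})"
    using cin by (intro has_field_derivative_subset[OF dh[of c]]) auto
  have "(h has_real_derivative (f c * (c - a) - F c) / (c - a)^2) (at c)"
    using dw[unfolded at_within_open[OF cin open_greaterThanLessThan]] .
  then have "(f c * (c - a) - F c) / (c - a)^2 = 0"
  proof (rule DERIV_local_min[where d="min (c - a) (b - c)"])
    show "0 < min (c - a) (b - c)" using cin by simp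
    show "\<forall>z. \<bar>c - z\<bar> < min (c - a) (b - c) \<longrightarrow> h c \<le> h z"
    proof (intro allI impI)
      fix z assume "\<bar>c - z\<bar> < min (c - a) (b - c)"
      then have "z \<in> {a..b}" by (auto simp: abs_less_iff)
      then show "h c \<le> h z" by (rule cmin)
    qed
  qed
  then have "f c = F c / (c - a)" using cin by (simp add: field_simps)
  then show ?thesis using cin by (auto simp: integral_mean_def F_def)
qed

theorem mainTheorem6:
  fixes f :: "real \<Rightarrow> real" and a b :: real
  assumes "a < b"
    and "continuous_on {a..b} f"
    and "(f a - integral_mean f a b) * (f b - integral_mean f a b) \<ge> 0"
  shows "\<exists>\<eta>\<in>{a<..b}. f \<eta> = integral_mean f a \<eta>"
proof -
  let ?M = "integral_mean f a b"
  consider "f b = ?M" | "f b > ?M" | "f b < ?M" by linarith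
  then show ?thesis
  proof cases
    case 1 then show ?thesis using assms(1) by auto
  next
    case 2
    then have "f b - ?M > 0" by simp
    then have "f a - ?M \<ge> 0" using assms(3) by (auto simp: zero_le_mult_iff)
    then have "f a \<ge> ?M" by simp
    from core[OF assms(1,2) this 2] show ?thesis by auto
  next
    case 3
    then have "f b - ?M < 0" by simp
    then have "f a - ?M \<le> 0" using assms(3) by (auto simp: zero_le_mult_iff)
    then have fa: "f a \<le> ?M" by simp
    have neg: "integral_mean (\<lambda>t. - f t) a x = - integral_mean f a x" for x
      by (simp add: integral_mean_def)
    have "continuous_on {a..b} (\<lambda>t. - f t)" using assms(2) by (intro continuous_intros)
    from core[OF assms(1) this] fa 3 obtain e where "e \<in> {a<..<b}" "- f e = integral_mean (\<lambda>t. - f t) a e"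
      by (auto simp: neg)
    then show ?thesis by (auto simp: neg)
  qed
qed

end
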